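(* Let $X$ be a standard one-dimensional Brownian motion starting at $0$, $p$ the atomic proposition with $X(\omega),t\models p$ iff $X_t(\omega)\geq1$, $\tau_p(\omega):=\inf\{t\geq0 : X_t(\omega)\geq1\}$, and $\phi_1:=\Box_{(1,2)}(\Diamond_{(1,4)}p\wedge\lnot\Diamond_{(1,3)}p)$. Suppose $\tau_p(\omega)\geq6$ (and $\tau_p(\omega)<\infty$, which holds almost surely). Then $X(\omega),t\not\models\phi_1$ for $0\leq t<\tau_p(\omega)-5$, $X(\omega),t\models\phi_1$ for $t=\tau_p(\omega)-5$, and $X(\omega),t\not\models\phi_1$ for $\tau_p(\omega)-5<t<\tau_p(\omega)-3$. In particular, $\tau_p(\omega)-5$ is an isolated point of $\{t\geq0 : X(\omega),t\models\phi_1\}$, and this occurs with positive probability.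
   Context: Continuous semantics: $\lnot,\wedge$ classical; $X(\omega),t\models\Diamond_I\phi$ iff $\exists s\in I$ with $X(\omega),t+s\models\phi$; $X(\omega),t\models\Box_I\phi$ iff $\forall s\in I$, $X(\omega),t+s\models\phi$. *)

theory Defs
  imports "HOL-Probability.Probability"
begin

definition std_brownian_motion :: "'a measure \<Rightarrow> (real \<Rightarrow> 'a \<Rightarrow> real) \<Rightarrow> bool" where
  "std_brownian_motion M X \<longleftrightarrow>
     prob_space M \<and>
     (\<forall>t\<ge>0. X t \<in> borel_measurable M) \<and>
     (\<forall>\<omega>\<in>space M. X 0 \<omega> = 0 \<and> continuous_on {0..} (\<lambda>t. X t \<omega>)) \<and>
     (\<forall>s t. 0 \<le> s \<and> s < t \<longrightarrow>
        distributed M lborel (\<lambda>\<omega>. X t \<omega> - X s \<omega>) (normal_density 0 (sqrt (t - s)))) \<and>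
     (\<forall>(ts :: nat \<Rightarrow> real) n. 0 \<le> ts 0 \<and> (\<forall>i<n. ts i < ts (Suc i)) \<longrightarrow>
        prob_space.indep_vars M (\<lambda>_. borel) (\<lambda>i \<omega>. X (ts (Suc i)) \<omega> - X (ts i) \<omega>) {..<n})"

datatype 'p tform =
    Atom 'p
  | Neg "'p tform"
  | Conj "'p tform" "'p tform"
  | Dia "real set" "'p tform"
  | Box "real set" "'p tform"

fun sat :: "('p \<Rightarrow> real \<Rightarrow> bool) \<Rightarrow> (real \<Rightarrow> real) \<Rightarrow> real \<Rightarrow> 'p tform \<Rightarrow> bool" where
  "sat L x t (Atom a) = L a (x t)"
| "sat L x t (Neg \<phi>) = (\<not> sat L x t \<phi>)"
| "sat L x t (Conj \<phi> \<psi>) = (sat L x t \<phi> \<and> sat L x t \<psi>)"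
| "sat L x t (Dia I \<phi>) = (\<exists>s\<in>I. sat L x (t + s) \<phi>)"
| "sat L x t (Box I \<phi>) = (\<forall>s\<in>I. sat L x (t + s) \<phi>)"

definition Lp :: "unit \<Rightarrow> real \<Rightarrow> bool" where
  "Lp a v \<longleftrightarrow> v \<ge> 1"

definition phi1 :: "unit tform" where
  "phi1 = Box {1<..<2} (Conj (Dia {1<..<4} (Atom ())) (Neg (Dia {1<..<3} (Atom ()))))"

text \<open>Hitting time of p (meaningful when the hitting set is nonempty).\<close>
definition tau_p :: "(real \<Rightarrow> 'a \<Rightarrow> real) \<Rightarrow> 'a \<Rightarrow> real" where
  "tau_p X \<omega> = Inf {t. t \<ge> 0 \<and> X t \<omega> \<ge> 1}"

end

theory Submission
  imports Defs
begin

lemma det_part: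
  fixes x :: "real \<Rightarrow> real"
  assumes cont: "continuous_on {0..} x" and ex: "\<exists>t\<ge>0. x t \<ge> 1"
    and T6: "Inf {t. t \<ge> 0 \<and> x t \<ge> 1} \<ge> 6"
  shows "(\<forall>t. 0 \<le> t \<and> t < Inf {t. t \<ge> 0 \<and> x t \<ge> 1} - 5 \<longrightarrow> \<not> sat Lp x t phi1) \<and>
            sat Lp x (Inf {t. t \<ge> 0 \<and> x t \<ge> 1} - 5) phi1 \<and>
            (\<forall>t. Inf {t. t \<ge> 0 \<and> x t \<ge> 1} - 5 < t \<and> t < Inf {t. t \<ge> 0 \<and> x t \<ge> 1} - 3 \<longrightarrow> \<not> sat Lp x t phi1) \<and>
            \<not> (Inf {t. t \<ge> 0 \<and> x t \<ge> 1} - 5) islimpt {t. t \<ge> 0 \<and> sat Lp x t phi1}"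
proof -
  define H where "H = {t. t \<ge> 0 \<and> x t \<ge> 1}"
  define T where "T = Inf H"
  have ne: "H \<noteq> {}" using ex by (auto simp: H_def)
  have bdd: "bdd_below H" by (auto simp: H_def bdd_below_def)
  have T6': "T \<ge> 6" using T6 by (simp add: T_def H_def)
  have below: "x t < 1" if "0 \<le> t" "t < T" for t
  proof (rule ccontr)
    assume "\<not> x t < 1"
    then have "t \<in> H" using that by (auto simp: H_def)
    then have "T \<le> t" unfolding T_def by (rule cInf_lower[OF _ bdd])
    then show False using that by simp
  qed
  have xT: "x T \<ge> 1"
  proof (rule ccontr)
    assume a: "\<not> x T \<ge> 1"
    have "T \<in> interior {0..}" using T6' by simp
    then have "isCont x T" using cont continuous_on_interior by blast
    then obtain d where d: "d > 0" "\<And>y. dist y T < d \<Longrightarrow> dist (x y) (x T) < 1 - x T"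
      using a unfolding continuous_at_eps_delta by (metis diff_gt_0_iff_gt not_le)
    obtain h where h: "h \<in> H" "h < T + d" using cInf_lessD[OF ne, of "T + d"] d by (auto simp: T_def)
    have "T \<le> h" unfolding T_def by (rule cInf_lower[OF h(1) bdd])
    then have "dist h T < d" using h d by (simp add: dist_real_def)
    from d(2)[OF this] have "x h < 1" by (simp add: dist_real_def abs_less_iff)
    then show False using h by (simp add: H_def)
  qed
  have sat_eq: "sat Lp x t phi1 \<longleftrightarrow> (\<forall>s\<in>{1<..<2}. (\<exists>u\<in>{1<..<4}. x (t+s+u) \<ge> 1) \<and> \<not>(\<exists>u\<in>{1<..<3}. x (t+s+u) \<ge> 1))" for t
    by (simp add: phi1_def Lp_def)
  have c1: "\<not> sat Lp x t phi1" if "0 \<le> t" "t < T - 5" for t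
  proof -
    define s where "s = min (3/2) (T - t - 4)"
    have s: "s \<in> {1<..<2}" "t + s + 4 \<le> T" using that by (auto simp: s_def)
    have "\<not>(\<exists>u\<in>{1<..<4}. x (t+s+u) \<ge> 1)"
    proof
      assume "\<exists>u\<in>{1<..<4}. x (t+s+u) \<ge> 1"
      then obtain u where u: "u \<in> {1<..<4}" "x (t+s+u) \<ge> 1" by blast
      have "x (t+s+u) < 1" using s u that by (intro below) auto
      then show False using u by simp
    qed
    then show ?thesis using s unfolding sat_eq by blast
  qed
  have c2: "sat Lp x (T - 5) phi1"
    unfolding sat_eq
  proof (intro ballI conjI)
    fix s :: real assume s: "s \<in> {1<..<2}"
    show "\<exists>u\<in>{1<..<4}. x (T - 5 + s + u) \<ge> 1"
      using s xT by (intro bexI[of _ "5 - s"]) auto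
    show "\<not>(\<exists>u\<in>{1<..<3}. x (T - 5 + s + u) \<ge> 1)"
    proof
      assume "\<exists>u\<in>{1<..<3}. x (T - 5 + s + u) \<ge> 1"
      then obtain u where u: "u \<in> {1<..<3}" "x (T - 5 + s + u) \<ge> 1" by blast
      have "x (T - 5 + s + u) < 1" using s u T6' by (intro below) auto
      then show False using u by simp
    qed
  qed
  have c3: "\<not> sat Lp x t phi1" if "T - 5 < t" "t < T - 3" for t
  proof -
    define s where "s = (max 1 (T - t - 3) + 2) / 2"
    have s: "s \<in> {1<..<2}" using that by (auto simp: s_def)
    have u: "T - t - s \<in> {1<..<3}" using that unfolding s_def max_def by (auto simp: field_simps)
    have "x (t + s + (T - t - s)) \<ge> 1" using xT by simp
    then show ?thesis using s u unfolding sat_eq by blast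
  qed
  have c4: "\<not> (T - 5) islimpt {t. t \<ge> 0 \<and> sat Lp x t phi1}"
  proof
    assume "(T - 5) islimpt {t. t \<ge> 0 \<and> sat Lp x t phi1}"
    then obtain t where t: "t \<ge> 0" "sat Lp x t phi1" "t \<noteq> T - 5" "dist t (T - 5) < 1"
      unfolding islimpt_approachable by (metis (no_types, lifting) mem_Collect_eq zero_less_one)
    show False
    proof (cases "t < T - 5")
      case True then show False using c1 t by blast
    next
      case False then show False using c3[of t] t by (auto simp: dist_real_def)
    qed
  qed
  show ?thesis using c1 c2 c3 c4 unfolding T_def H_def by blast
qed

lemma grid_cancel: "real (c * 2^n) / 2^(j+n) = real c / (2::real)^j"
  by (simp add: power_add)

context
  fixes M :: "'a measure" and X :: "real \<Rightarrow> 'a \<Rightarrow> real"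
  assumes BM: "std_brownian_motion M X"
begin

lemma bm_ps: "prob_space M" using BM by (simp add: std_brownian_motion_def)

interpretation P: prob_space M by (rule bm_ps)

lemma bm_meas: "0 \<le> t \<Longrightarrow> X t \<in> borel_measurable M"
  using BM by (simp add: std_brownian_motion_def)

lemma bm_meas_grid[measurable]: "X (real a / 2 ^ N) \<in> borel_measurable M"
  by (rule bm_meas) simp

lemma bm_zero: "\<omega> \<in> space M \<Longrightarrow> X 0 \<omega> = 0"
  using BM by (simp add: std_brownian_motion_def)

lemma bm_cont: "\<omega> \<in> space M \<Longrightarrow> continuous_on {0..} (\<lambda>t. X t \<omega>)"
  using BM by (simp add: std_brownian_motion_def)

lemma bm_distr: "0 \<le> s \<Longrightarrow> s < t \<Longrightarrow>
   distributed M lborel (\<lambda>\<omega>. X t \<omega> - X s \<omega>) (normal_density 0 (sqrt (t - s)))"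
  using BM by (simp add: std_brownian_motion_def)

lemma bm_indep: "0 \<le> ts 0 \<Longrightarrow> (\<And>i. i < n \<Longrightarrow> ts i < ts (Suc i)) \<Longrightarrow>
   P.indep_vars (\<lambda>_. borel) (\<lambda>i \<omega>. X (ts (Suc i)) \<omega> - X (ts i) \<omega>) {..<n}"
  using BM unfolding std_brownian_motion_def by blast

lemma inc_half:
  assumes st: "0 \<le> s" "s < t"
  shows "P.prob {\<omega>\<in>space M. X t \<omega> - X s \<omega> < 0} = 1/2"
proof -
  define Y where "Y = (\<lambda>\<omega>. X t \<omega> - X s \<omega>)"
  define f where "f = normal_density 0 (sqrt (t - s))"
  have D: "distributed M lborel Y (\<lambda>x. ennreal (f x))" using bm_distr[OF st] by (simp add: Y_def f_def)
  have fsym: "f (- x) = f x" for x by (simp add: f_def normal_density_def)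
  have Ym: "Y \<in> borel_measurable M" using bm_meas st by (simp add: Y_def)
  have e: "emeasure M {\<omega>\<in>space M. Y \<omega> \<in> A} = (\<integral>\<^sup>+x. ennreal (f x) * indicator A x \<partial>lborel)"
    if "A \<in> sets borel" for A
    using distributed_emeasure[OF D, of A] that by (simp add: vimage_def Int_def conj_commute)
  have sym: "(\<integral>\<^sup>+x. ennreal (f x) * indicator {0<..} x \<partial>lborel) = (\<integral>\<^sup>+x. ennreal (f x) * indicator {..<0} x \<partial>lborel)"
  proof -
    have "(\<integral>\<^sup>+x. ennreal (f x) * indicator {..<0} x \<partial>lborel) = (\<integral>\<^sup>+x. ennreal (f x) * indicator {..<0} x \<partial>distr lborel borel uminus)"
      by (simp add: lborel_distr_uminus)
    also have "\<dots> = (\<integral>\<^sup>+x. ennreal (f (-x)) * indicator {..<0} (-x) \<partial>lborel)"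
      by (subst nn_integral_distr) (auto simp: f_def)
    also have "\<dots> = (\<integral>\<^sup>+x. ennreal (f x) * indicator {0<..} x \<partial>lborel)"
      by (intro nn_integral_cong) (auto simp: fsym split: split_indicator)
    finally show ?thesis by simp
  qed
  have z: "(\<integral>\<^sup>+x. ennreal (f x) * indicator {0} x \<partial>lborel) = 0"
  proof -
    have "AE x in lborel. ennreal (f x) * indicator {0} x = 0"
      using AE_lborel_singleton[of 0] by eventually_elim auto
    from nn_integral_cong_AE[OF this] show ?thesis by simp
  qed
  have m1: "{\<omega>\<in>space M. Y \<omega> < 0} \<in> sets M" using Ym by measurable
  have m2: "{\<omega>\<in>space M. Y \<omega> > 0} \<in> sets M" using Ym by measurable
  have m3: "{\<omega>\<in>space M. Y \<omega> = 0} \<in> sets M" using Ym by measurable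
  have eq1: "emeasure M {\<omega>\<in>space M. Y \<omega> < 0} = emeasure M {\<omega>\<in>space M. Y \<omega> > 0}"
    using e[of "{..<0}"] e[of "{0<..}"] sym by simp
  have eq0: "emeasure M {\<omega>\<in>space M. Y \<omega> = 0} = 0"
    using e[of "{0}"] z by simp
  have "P.prob {\<omega>\<in>space M. Y \<omega> < 0} = P.prob {\<omega>\<in>space M. Y \<omega> > 0}"
    using eq1 by (simp add: P.emeasure_eq_measure)
  moreover have "P.prob {\<omega>\<in>space M. Y \<omega> = 0} = 0"
    using eq0 by (simp add: P.emeasure_eq_measure)
  moreover have "P.prob {\<omega>\<in>space M. Y \<omega> < 0} + P.prob {\<omega>\<in>space M. Y \<omega> > 0} + P.prob {\<omega>\<in>space M. Y \<omega> = 0} = 1"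
  proof -
    have "P.prob {\<omega>\<in>space M. Y \<omega> < 0} + P.prob {\<omega>\<in>space M. Y \<omega> > 0} = P.prob ({\<omega>\<in>space M. Y \<omega> < 0} \<union> {\<omega>\<in>space M. Y \<omega> > 0})"
      using m1 m2 by (intro P.finite_measure_Union[symmetric]) auto
    also have "\<dots> + P.prob {\<omega>\<in>space M. Y \<omega> = 0} = P.prob (({\<omega>\<in>space M. Y \<omega> < 0} \<union> {\<omega>\<in>space M. Y \<omega> > 0}) \<union> {\<omega>\<in>space M. Y \<omega> = 0})"
      using m1 m2 m3 by (intro P.finite_measure_Union[symmetric]) auto
    also have "({\<omega>\<in>space M. Y \<omega> < 0} \<union> {\<omega>\<in>space M. Y \<omega> > 0}) \<union> {\<omega>\<in>space M. Y \<omega> = 0} = space M"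
      by auto
    finally show ?thesis by (simp add: P.prob_space)
  qed
  ultimately show ?thesis by (simp add: Y_def)
qed

lemma inc_tail_pos:
  assumes st: "0 \<le> s" "s < t"
  shows "P.prob {\<omega>\<in>space M. X t \<omega> - X s \<omega> \<ge> c} > 0"
proof -
  define Y where "Y = (\<lambda>\<omega>. X t \<omega> - X s \<omega>)"
  define f where "f = normal_density 0 (sqrt (t - s))"
  have D: "distributed M lborel Y (\<lambda>x. ennreal (f x))" using bm_distr[OF st] by (simp add: Y_def f_def)
  have fpos: "\<not> f x \<le> 0" for x using st by (simp add: f_def normal_density_pos not_le)
  have e: "emeasure M {\<omega>\<in>space M. Y \<omega> \<ge> c} = (\<integral>\<^sup>+x. ennreal (f x) * indicator {c..} x \<partial>lborel)"
    using distributed_emeasure[OF D, of "{c..}"] by (simp add: vimage_def Int_def conj_commute)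
  have ne: "(\<integral>\<^sup>+x. ennreal (f x) * indicator {c..} x \<partial>lborel) \<noteq> 0"
  proof
    assume "(\<integral>\<^sup>+x. ennreal (f x) * indicator {c..} x \<partial>lborel) = 0"
    then have "AE x in lborel. ennreal (f x) * indicator {c..} x = 0"
      by (subst (asm) nn_integral_0_iff_AE) (auto simp: f_def)
    then have "AE x in lborel. x < c"
      by (rule eventually_mono) (auto split: split_indicator_asm simp: ennreal_eq_0_iff fpos)
    then have "emeasure lborel {x\<in>space lborel. \<not> x < c} = 0"
      by (subst (asm) AE_iff_measurable[OF _ refl]) auto
    moreover have "{x\<in>space lborel. \<not> x < c} = {c..}" by auto
    ultimately have "emeasure lborel {c..} = 0" by simp
    moreover have "emeasure lborel {c..c+1} \<le> emeasure lborel {c..}" by (rule emeasure_mono) auto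
    ultimately show False by simp
  qed
  have "ennreal (P.prob {\<omega>\<in>space M. Y \<omega> \<ge> c}) \<noteq> 0"
    using e ne by (simp add: P.emeasure_eq_measure)
  then show ?thesis using measure_nonneg[of M "{\<omega>\<in>space M. Y \<omega> \<ge> c}"] by (simp add: Y_def less_le)
qed


definition Hev :: "nat \<Rightarrow> 'a set" where
  "Hev j = {\<omega>\<in>space M. \<forall>N a b::nat. b \<le> 7*2^N \<longrightarrow> a \<le> b \<longrightarrow> real (b - a) / 2^N \<le> 1/2^j \<longrightarrow>
      \<bar>X (real b / 2^N) \<omega> - X (real a / 2^N) \<omega>\<bar> \<le> 1/2}"

lemma Hev_sets: "Hev j \<in> sets M"
  unfolding Hev_def by measurable

lemma Hev_inc: "incseq Hev"
proof (rule incseq_SucI)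
  fix j
  have "(1::real)/2^Suc j \<le> 1/2^j" by (simp add: field_simps)
  then show "Hev j \<subseteq> Hev (Suc j)" unfolding Hev_def by (auto intro: order_trans)
qed

lemma Hev_Un: "(\<Union>j. Hev j) = space M"
proof
  show "(\<Union>j. Hev j) \<subseteq> space M" by (auto simp: Hev_def)
  show "space M \<subseteq> (\<Union>j. Hev j)"
  proof
    fix \<omega> assume \<omega>: "\<omega> \<in> space M"
    have "continuous_on {0..7} (\<lambda>t. X t \<omega>)"
      using bm_cont[OF \<omega>] by (rule continuous_on_subset) auto
    then have "uniformly_continuous_on {0..7} (\<lambda>t. X t \<omega>)"
      by (rule compact_uniformly_continuous) simp
    then obtain d where d: "d > 0" "\<And>s t. s \<in> {0..7} \<Longrightarrow> t \<in> {0..7} \<Longrightarrow> dist s t < d \<Longrightarrow> dist (X s \<omega>) (X t \<omega>) < 1/2"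
      unfolding uniformly_continuous_on_def by (metis half_gt_zero zero_less_one)
    obtain j where j: "(1/2::real)^j < d" using real_arch_pow_inv[OF d(1), of "1/2"] by auto
    have "\<omega> \<in> Hev j"
      unfolding Hev_def
    proof (intro CollectI conjI allI impI \<omega>)
      fix N a b :: nat
      assume ab: "b \<le> 7*2^N" "a \<le> b" "real (b - a) / 2^N \<le> 1/2^j"
      have b7: "real b / 2^N \<le> 7" using ab(1) by (simp add: field_simps) (metis of_nat_le_iff of_nat_mult of_nat_numeral of_nat_power)
      have a7: "real a / 2^N \<le> 7" using ab(1,2) b7 by (smt (verit, best) divide_right_mono of_nat_mono zero_le_power)
      have "dist (real b / 2^N) (real a / 2^N) = real (b - a) / 2^N"
        using ab(2) divide_right_mono[of "real a" "real b" "2^N"] by (simp add: dist_real_def of_nat_diff diff_divide_distrib)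
      also have "\<dots> < d" using ab(3) j by (simp add: power_one_over)
      finally have "dist (X (real b / 2^N) \<omega>) (X (real a / 2^N) \<omega>) < 1/2"
        using a7 b7 by (intro d(2)) auto
      then show "\<bar>X (real b / 2^N) \<omega> - X (real a / 2^N) \<omega>\<bar> \<le> 1/2" by (simp add: dist_real_def)
    qed
    then show "\<omega> \<in> (\<Union>j. Hev j)" by blast
  qed
qed

lemma Hev_big: "\<exists>j. P.prob (Hev j) > 1/2"
proof -
  have "(\<lambda>j. P.prob (Hev j)) \<longlonglongrightarrow> P.prob (\<Union>j. Hev j)"
    using Hev_sets Hev_inc by (intro P.finite_Lim_measure_incseq) auto
  then have "(\<lambda>j. P.prob (Hev j)) \<longlonglongrightarrow> 1" by (simp add: Hev_Un P.prob_space)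
  from order_tendstoD(1)[OF this, of "1/2"] show ?thesis
    by (auto dest: eventually_happens)
qed

definition Pk :: "nat \<Rightarrow> nat \<Rightarrow> nat \<Rightarrow> 'a set" where
  "Pk j n k = {\<omega>\<in>space M. (\<forall>a b::nat. k*2^n \<le> a \<longrightarrow> a \<le> b \<longrightarrow> b \<le> Suc k*2^n \<longrightarrow>
        \<bar>X (real b/2^(j+n)) \<omega> - X (real a/2^(j+n)) \<omega>\<bar> \<le> 1/2) \<and>
      X (real (Suc k*2^n)/2^(j+n)) \<omega> - X (real (k*2^n)/2^(j+n)) \<omega> < 0}"

definition Bev :: "nat \<Rightarrow> nat \<Rightarrow> 'a set" where
  "Bev j n = {\<omega>\<in>space M. X (real (Suc (6*2^j)*2^n)/2^(j+n)) \<omega> - X (real (6*2^j*2^n)/2^(j+n)) \<omega> \<ge> 3*2^j+1}"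

definition Fev :: "nat \<Rightarrow> nat \<Rightarrow> 'a set" where
  "Fev j n = (\<Inter>k<6*2^j. Pk j n k) \<inter> Bev j n"

lemma Pk_sets[measurable]: "Pk j n k \<in> sets M"
  unfolding Pk_def by measurable

lemma Bev_sets[measurable]: "Bev j n \<in> sets M"
  unfolding Bev_def by measurable

lemma Fev_indep: "P.prob (Fev j n) = (\<Prod>k<6*2^j. P.prob (Pk j n k)) * P.prob (Bev j n)"
proof -
  define m :: nat where "m = 6*2^j"
  define r :: nat where "r = 2^n"
  define ts where "ts i = real i / 2^(j+n)" for i :: nat
  define d where "d i \<omega> = X (ts (Suc i)) \<omega> - X (ts i) \<omega>" for i \<omega>
  have rpos: "r > 0" by (simp add: r_def)
  have I0: "P.indep_vars (\<lambda>_. borel) d {..<Suc m * r}"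
    unfolding d_def by (rule bm_indep) (auto simp: ts_def divide_strict_right_mono)
  define Kb where "Kb k = {k*r..<Suc k*r}" for k
  have Kdiv: "i div r = k" if "i \<in> Kb k" for i k
    using that by (intro div_nat_eqI) (auto simp: Kb_def mult.commute)
  have I1: "P.indep_vars (\<lambda>k. PiM (Kb k) (\<lambda>_. borel)) (\<lambda>k \<omega>. restrict (\<lambda>i. d i \<omega>) (Kb k)) {..m}"
  proof (rule P.indep_vars_restrict[OF I0])
    show "Kb k \<subseteq> {..<Suc m * r}" if "k \<in> {..m}" for k
    proof -
      have "Suc k * r \<le> Suc m * r" using that by (intro mult_right_mono) auto
      then show ?thesis unfolding Kb_def by (meson atLeastLessThan_iff lessThan_iff order.strict_trans2 subsetI)
    qed
    show "disjoint_family_on Kb {..m}"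
      unfolding disjoint_family_on_def using Kdiv by blast
  qed
  define g where "g k v = (if k < m then (\<forall>a b. k*r \<le> a \<longrightarrow> a \<le> b \<longrightarrow> b \<le> Suc k*r \<longrightarrow>
      \<bar>\<Sum>i\<in>Kb k. if a \<le> i \<and> i < b then v i else 0\<bar> \<le> (1/2::real)) \<and> (\<Sum>i\<in>Kb k. v i) < 0
     else (\<Sum>i\<in>Kb k. v i) \<ge> 3*2^j+1)" for k and v :: "nat \<Rightarrow> real"
  have gm: "g k \<in> measurable (PiM (Kb k) (\<lambda>_. borel)) (count_space UNIV)" for k
    unfolding g_def by measurable
  have I2: "P.indep_vars (\<lambda>_. count_space UNIV) (\<lambda>k \<omega>. g k (restrict (\<lambda>i. d i \<omega>) (Kb k))) {..m}"
    by (rule P.indep_vars_compose2[OF I1 gm])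
  note I3 = P.indep_varsD[OF I2, of "{..m}" "\<lambda>_. {True}"]
  have S1: "(\<Sum>i\<in>Kb k. if a \<le> i \<and> i < b then restrict (\<lambda>i. d i \<omega>) (Kb k) i else 0) = X (ts b) \<omega> - X (ts a) \<omega>"
    if "k*r \<le> a" "a \<le> b" "b \<le> Suc k*r" for k a b \<omega>
  proof -
    have "(\<Sum>i\<in>Kb k. if a \<le> i \<and> i < b then restrict (\<lambda>i. d i \<omega>) (Kb k) i else 0)
        = (\<Sum>i\<in>Kb k. if a \<le> i \<and> i < b then d i \<omega> else 0)"
      by (intro sum.cong) auto
    also have "\<dots> = (\<Sum>i\<in>{i\<in>Kb k. a \<le> i \<and> i < b}. d i \<omega>)"
      by (rule sum.inter_filter[symmetric]) (simp add: Kb_def)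
    also have "{i\<in>Kb k. a \<le> i \<and> i < b} = {a..<b}"
      using that by (auto simp: Kb_def simp del: mult_Suc)
    also have "(\<Sum>i\<in>{a..<b}. d i \<omega>) = X (ts b) \<omega> - X (ts a) \<omega>"
      unfolding d_def by (rule sum_Suc_diff'[OF that(2), of "\<lambda>i. X (ts i) \<omega>"])
    finally show ?thesis .
  qed
  have S2: "(\<Sum>i\<in>Kb k. restrict (\<lambda>i. d i \<omega>) (Kb k) i) = X (ts (Suc k * r)) \<omega> - X (ts (k*r)) \<omega>" for k \<omega>
  proof -
    have "(\<Sum>i\<in>Kb k. restrict (\<lambda>i. d i \<omega>) (Kb k) i) = (\<Sum>i\<in>{k*r..<Suc k * r}. d i \<omega>)"
      by (intro sum.cong) (auto simp: Kb_def)
    also have "\<dots> = X (ts (Suc k * r)) \<omega> - X (ts (k*r)) \<omega>"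
      unfolding d_def by (rule sum_Suc_diff'[of _ _ "\<lambda>i. X (ts i) \<omega>"]) simp
    finally show ?thesis .
  qed
  have Pk_alt: "Pk j n k = {\<omega>\<in>space M. (\<forall>a b::nat. k*r \<le> a \<longrightarrow> a \<le> b \<longrightarrow> b \<le> Suc k*r \<longrightarrow>
        \<bar>X (ts b) \<omega> - X (ts a) \<omega>\<bar> \<le> 1/2) \<and> X (ts (Suc k*r)) \<omega> - X (ts (k*r)) \<omega> < 0}" for k
    unfolding Pk_def ts_def r_def by (rule refl)
  have Bev_alt: "Bev j n = {\<omega>\<in>space M. X (ts (Suc m*r)) \<omega> - X (ts (m*r)) \<omega> \<ge> 3*2^j+1}"
    unfolding Bev_def ts_def r_def m_def by (rule refl)
  have ev1: "(\<lambda>\<omega>. g k (restrict (\<lambda>i. d i \<omega>) (Kb k))) -` {True} \<inter> space M = Pk j n k" if "k < m" for k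
  proof -
    have "g k (restrict (\<lambda>i. d i \<omega>) (Kb k)) \<longleftrightarrow> (\<forall>a b::nat. k*r \<le> a \<longrightarrow> a \<le> b \<longrightarrow> b \<le> Suc k*r \<longrightarrow>
        \<bar>X (ts b) \<omega> - X (ts a) \<omega>\<bar> \<le> 1/2) \<and> X (ts (Suc k*r)) \<omega> - X (ts (k*r)) \<omega> < 0" for \<omega>
    proof -
      have 1: "g k (restrict (\<lambda>i. d i \<omega>) (Kb k)) = ((\<forall>a b. k*r \<le> a \<longrightarrow> a \<le> b \<longrightarrow> b \<le> Suc k*r \<longrightarrow>
          \<bar>\<Sum>i\<in>Kb k. if a \<le> i \<and> i < b then restrict (\<lambda>i. d i \<omega>) (Kb k) i else 0\<bar> \<le> (1/2::real)) \<and>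
          (\<Sum>i\<in>Kb k. restrict (\<lambda>i. d i \<omega>) (Kb k) i) < 0)"
        unfolding g_def by (simp only: if_P[OF that])
      have 2: "(\<forall>a b. k*r \<le> a \<longrightarrow> a \<le> b \<longrightarrow> b \<le> Suc k*r \<longrightarrow>
          \<bar>\<Sum>i\<in>Kb k. if a \<le> i \<and> i < b then restrict (\<lambda>i. d i \<omega>) (Kb k) i else 0\<bar> \<le> (1/2::real)) =
          (\<forall>a b::nat. k*r \<le> a \<longrightarrow> a \<le> b \<longrightarrow> b \<le> Suc k*r \<longrightarrow> \<bar>X (ts b) \<omega> - X (ts a) \<omega>\<bar> \<le> 1/2)"
      proof (intro iffI allI impI)
        fix a b :: nat
        assume H: "\<forall>a b. k*r \<le> a \<longrightarrow> a \<le> b \<longrightarrow> b \<le> Suc k*r \<longrightarrow>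
          \<bar>\<Sum>i\<in>Kb k. if a \<le> i \<and> i < b then restrict (\<lambda>i. d i \<omega>) (Kb k) i else 0\<bar> \<le> (1/2::real)"
          and ab: "k*r \<le> a" "a \<le> b" "b \<le> Suc k*r"
        show "\<bar>X (ts b) \<omega> - X (ts a) \<omega>\<bar> \<le> 1/2"
          using H[rule_format, OF ab] unfolding S1[OF ab] .
      next
        fix a b :: nat
        assume H: "\<forall>a b::nat. k*r \<le> a \<longrightarrow> a \<le> b \<longrightarrow> b \<le> Suc k*r \<longrightarrow> \<bar>X (ts b) \<omega> - X (ts a) \<omega>\<bar> \<le> 1/2"
          and ab: "k*r \<le> a" "a \<le> b" "b \<le> Suc k*r"
        show "\<bar>\<Sum>i\<in>Kb k. if a \<le> i \<and> i < b then restrict (\<lambda>i. d i \<omega>) (Kb k) i else 0\<bar> \<le> (1/2::real)"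
          using H[rule_format, OF ab] unfolding S1[OF ab] .
      qed
      show ?thesis unfolding 1 2 S2 ..
    qed
    then show ?thesis unfolding Pk_alt by blast
  qed
  have ev2: "(\<lambda>\<omega>. g m (restrict (\<lambda>i. d i \<omega>) (Kb m))) -` {True} \<inter> space M = Bev j n"
  proof -
    have "g m (restrict (\<lambda>i. d i \<omega>) (Kb m)) \<longleftrightarrow> X (ts (Suc m*r)) \<omega> - X (ts (m*r)) \<omega> \<ge> 3*2^j+1" for \<omega>
      unfolding g_def S2 by simp
    then show ?thesis unfolding Bev_alt by blast
  qed
  have "(\<Inter>k\<in>{..m}. (\<lambda>\<omega>. g k (restrict (\<lambda>i. d i \<omega>) (Kb k))) -` {True} \<inter> space M) = Fev j n"
  proof -
    have "{..m} = insert m {..<m}" by auto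
    then have "(\<Inter>k\<in>{..m}. (\<lambda>\<omega>. g k (restrict (\<lambda>i. d i \<omega>) (Kb k))) -` {True} \<inter> space M)
       = Bev j n \<inter> (\<Inter>k\<in>{..<m}. Pk j n k)"
      using ev1 ev2 by simp
    then show ?thesis unfolding Fev_def m_def by blast
  qed
  moreover have "(\<Prod>k\<in>{..m}. P.prob ((\<lambda>\<omega>. g k (restrict (\<lambda>i. d i \<omega>) (Kb k))) -` {True} \<inter> space M))
      = (\<Prod>k<m. P.prob (Pk j n k)) * P.prob (Bev j n)"
    unfolding lessThan_Suc_atMost[symmetric] prod.lessThan_Suc using ev1 ev2 by simp
  ultimately show ?thesis using I3 by (simp add: m_def)
qed

lemma Pk_alt2: "Pk j n k = {\<omega>\<in>space M. (\<forall>a b::nat. k*2^n \<le> a \<longrightarrow> a \<le> b \<longrightarrow> b \<le> Suc k*2^n \<longrightarrow>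
        \<bar>X (real b/2^(j+n)) \<omega> - X (real a/2^(j+n)) \<omega>\<bar> \<le> 1/2) \<and>
      X (real (Suc k)/2^j) \<omega> - X (real k/2^j) \<omega> < 0}"
  unfolding Pk_def grid_cancel ..

lemma Pk_lower:
  assumes k: "k < 6*2^j"
  shows "P.prob (Pk j n k) \<ge> P.prob (Hev j) - 1/2"
proof -
  define s :: real where "s = real k/2^j"
  define t :: real where "t = real (Suc k)/2^j"
  have st: "0 \<le> s" "s < t" by (simp_all add: s_def t_def divide_strict_right_mono)
  define Neg where "Neg = {\<omega>\<in>space M. X t \<omega> - X s \<omega> < 0}"
  have pN: "P.prob Neg = 1/2" using inc_half[OF st] by (simp add: Neg_def)
  have [measurable]: "X t \<in> borel_measurable M" "X s \<in> borel_measurable M"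
    using bm_meas st by auto
  have Nsets: "Neg \<in> sets M" unfolding Neg_def by measurable
  have sub: "Hev j \<inter> Neg \<subseteq> Pk j n k"
  proof
    fix \<omega> assume w: "\<omega> \<in> Hev j \<inter> Neg"
    have H: "\<forall>N a b::nat. b \<le> 7*2^N \<longrightarrow> a \<le> b \<longrightarrow> real (b - a) / 2^N \<le> 1/2^j \<longrightarrow>
      \<bar>X (real b / 2^N) \<omega> - X (real a / 2^N) \<omega>\<bar> \<le> 1/2" using w by (simp add: Hev_def)
    have A: "\<bar>X (real b/2^(j+n)) \<omega> - X (real a/2^(j+n)) \<omega>\<bar> \<le> 1/2"
      if ab: "k*2^n \<le> a" "a \<le> b" "b \<le> Suc k*2^n" for a b :: nat
    proof -
      have "Suc k * 2^n \<le> 6*2^j*2^n" using k by (intro mult_right_mono) auto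
      also have "\<dots> \<le> 7*2^(j+n)" by (simp add: power_add)
      finally have b7: "b \<le> 7*2^(j+n)" using ab(3) by linarith
      have "b - a \<le> 2^n" using ab by simp
      then have "real (b - a) \<le> 2^n" by (metis of_nat_le_iff of_nat_numeral of_nat_power)
      then have "real (b - a) / 2^(j+n) \<le> 2^n / 2^(j+n)" by (intro divide_right_mono) auto
      also have "(2::real)^n / 2^(j+n) = 1/2^j" by (simp add: power_add)
      finally show ?thesis using H b7 ab(2) by blast
    qed
    have B: "X t \<omega> - X s \<omega> < 0" using w by (simp add: Neg_def)
    show "\<omega> \<in> Pk j n k" unfolding Pk_alt2 using w A B by (auto simp: s_def t_def Neg_def)
  qed
  have "P.prob (Hev j \<union> Neg) = P.prob (Hev j) + P.prob Neg - P.prob (Hev j \<inter> Neg)"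
    using Hev_sets Nsets by (intro measure_Un3) (auto simp: P.fmeasurable_eq_sets)
  moreover have "P.prob (Hev j \<union> Neg) \<le> 1" by (rule P.prob_le_1)
  moreover have "P.prob (Hev j \<inter> Neg) \<le> P.prob (Pk j n k)"
    using sub Pk_sets by (intro P.finite_measure_mono) auto
  ultimately show ?thesis using pN by linarith
qed

lemma Bev_const: "Bev j n = Bev j 0"
  unfolding Bev_def grid_cancel ..

lemma Fev_dec: "decseq (Fev j)"
proof (rule decseq_SucI)
  fix n
  have "Pk j (Suc n) k \<subseteq> Pk j n k" for k
  proof
    fix \<omega> assume w: "\<omega> \<in> Pk j (Suc n) k"
    have A: "\<bar>X (real b/2^(j+n)) \<omega> - X (real a/2^(j+n)) \<omega>\<bar> \<le> 1/2"
      if ab: "k*2^n \<le> a" "a \<le> b" "b \<le> Suc k*2^n" for a b :: nat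
    proof -
      have ab': "k*2^Suc n \<le> 2*a" "2*a \<le> 2*b" "2*b \<le> Suc k*2^Suc n" using ab by auto
      have "\<bar>X (real (2*b)/2^(j+Suc n)) \<omega> - X (real (2*a)/2^(j+Suc n)) \<omega>\<bar> \<le> 1/2"
        using w ab' unfolding Pk_alt2 by blast
      moreover have "real (2*c)/2^(j+Suc n) = real c/2^(j+n)" for c :: nat by simp
      ultimately show ?thesis by simp
    qed
    then show "\<omega> \<in> Pk j n k" using w unfolding Pk_alt2 by blast
  qed
  then show "Fev j (Suc n) \<subseteq> Fev j n"
    unfolding Fev_def using Bev_const[of j n] Bev_const[of j "Suc n"] by blast
qed

lemma Fev_path:
  assumes w: "\<omega> \<in> (\<Inter>n. Fev j n)"
  shows "(\<forall>t\<in>{0..6}. X t \<omega> \<le> 1/2) \<and> X (real (Suc (6*2^j))/2^j) \<omega> \<ge> 1"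
proof -
  have sp: "\<omega> \<in> space M" using w by (auto simp: Fev_def Bev_def)
  have Pk: "\<omega> \<in> Pk j n k" if "k < 6*2^j" for n k using w that by (auto simp: Fev_def)
  have "\<omega> \<in> Fev j 0" using w by blast
  then have Bv: "\<omega> \<in> Bev j 0" by (simp add: Fev_def)
  have a: "X (real k/2^j) \<omega> \<le> 0" if "k \<le> 6*2^j" for k
    using that
  proof (induction k)
    case 0 then show ?case using bm_zero[OF sp] by simp
  next
    case (Suc k)
    then have "X (real (Suc k)/2^j) \<omega> - X (real k/2^j) \<omega> < 0" using Pk[of k 0] unfolding Pk_alt2 by auto
    then show ?case using Suc by simp
  qed
  have b: "X (real k/2^j) \<omega> \<ge> - real k / 2" if "k \<le> 6*2^j" for k
    using that
  proof (induction k)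
    case 0 then show ?case using bm_zero[OF sp] by simp
  next
    case (Suc k)
    then have kl: "k < 6*2^j" by simp
    from Pk[OF kl, of 0] have "\<forall>a b::nat. k*2^0 \<le> a \<longrightarrow> a \<le> b \<longrightarrow> b \<le> Suc k*2^0 \<longrightarrow>
        \<bar>X (real b/2^(j+0)) \<omega> - X (real a/2^(j+0)) \<omega>\<bar> \<le> 1/2"
      unfolding Pk_alt2 by blast
    then have "\<bar>X (real (Suc k)/2^(j+0)) \<omega> - X (real k/2^(j+0)) \<omega>\<bar> \<le> 1/2"
      by (drule_tac spec[of _ k], drule_tac spec[of _ "Suc k"]) simp
    then have e1: "\<bar>X (real (Suc k)/2^j) \<omega> - X (real k/2^j) \<omega>\<bar> \<le> 1/2" by simp
    have IH: "X (real k/2^j) \<omega> \<ge> - real k/2" using Suc by simp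
    have e2: "- real (Suc k)/2 = - real k/2 - 1/2" by (simp add: field_simps)
    show ?case unfolding e2 using e1 IH by (simp only: abs_le_iff) linarith
  qed
  have c: "X (real a/2^(j+n)) \<omega> \<le> 1/2" if "a \<le> 6*2^j*2^n" for a n
  proof (cases "a = 6*2^j*2^n")
    case True
    have "real a/2^(j+n) = real (6*2^j)/2^j" unfolding True grid_cancel by (rule refl)
    then show ?thesis using a[of "6*2^j"] by simp
  next
    case False
    define k where "k = a div 2^n"
    have ak: "a < 6*2^j*2^n" using that False by simp
    have k: "k < 6*2^j" unfolding k_def using ak by (simp add: less_mult_imp_div_less)
    have k1: "k*2^n \<le> a" unfolding k_def by simp
    have k2: "a \<le> Suc k*2^n"
      unfolding k_def by (metis less_or_eq_imp_le mod_less_divisor div_mult_mod_eq mult_Suc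
          add.commute add_less_cancel_left zero_less_numeral zero_less_power)
    have "\<bar>X (real a/2^(j+n)) \<omega> - X (real (k*2^n)/2^(j+n)) \<omega>\<bar> \<le> 1/2"
      using Pk[OF k, of n] k1 k2 unfolding Pk_alt2 by blast
    then have "X (real a/2^(j+n)) \<omega> - X (real k/2^j) \<omega> \<le> 1/2" unfolding grid_cancel by (rule abs_le_D1)
    then show ?thesis using a[of k] k by simp
  qed
  have d: "X t \<omega> \<le> 1/2" if t: "t \<in> {0..6}" for t
  proof (rule ccontr)
    assume "\<not> X t \<omega> \<le> 1/2"
    then have e: "X t \<omega> - 1/2 > 0" by simp
    from bm_cont[OF sp] t e obtain dl where dl: "dl > 0"
      "\<And>s. s \<in> {0..} \<Longrightarrow> dist s t < dl \<Longrightarrow> dist (X s \<omega>) (X t \<omega>) < X t \<omega> - 1/2"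
      unfolding continuous_on_iff by (metis atLeastAtMost_iff atLeast_iff)
    obtain n where n: "(1/2::real)^n < dl" using real_arch_pow_inv[OF dl(1), of "1/2"] by auto
    define N where "N = j + n"
    define a where "a = nat \<lfloor>t * 2^N\<rfloor>"
    have tN: "t * 2^N \<ge> 0" using t by simp
    have ra: "real a = of_int \<lfloor>t * 2^N\<rfloor>" unfolding a_def using tN by simp
    have a1: "real a \<le> t * 2^N" using ra by simp
    have a2: "t * 2^N < real a + 1" using ra by linarith
    have "t * 2^N \<le> 6 * 2^N" using t by (intro mult_right_mono) auto
    then have "real a \<le> 6 * 2^N" using a1 by linarith
    then have "real a \<le> real (6*2^j*2^n)" unfolding N_def power_add by simp
    then have "a \<le> 6*2^j*2^n" by (simp only: of_nat_le_iff)
    then have xs: "X (real a/2^N) \<omega> \<le> 1/2" using c N_def by simp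
    have s0: "real a / 2^N \<in> {0..}" by simp
    have "dist (real a / 2^N) t = t - real a / 2^N" using a1 by (simp add: dist_real_def field_simps)
    also have "\<dots> < 1/2^N"
    proof -
      have "t - real a / 2^N = (t * 2^N - real a) / 2^N" by (simp add: diff_divide_distrib)
      also have "\<dots> < 1 / 2^N" using a2 by (intro divide_strict_right_mono) auto
      finally show ?thesis .
    qed
    also have "1/(2::real)^N \<le> (1/2)^n" unfolding N_def by (simp add: power_add power_one_over field_simps)
    finally have "dist (X (real a/2^N) \<omega>) (X t \<omega>) < X t \<omega> - 1/2" using n dl(2)[OF s0] by simp
    then show False using xs by (simp add: dist_real_def)
  qed
  have "X (real (Suc (6*2^j))/2^j) \<omega> - X (real (6*2^j)/2^j) \<omega> \<ge> 3*2^j+1"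
    using Bv unfolding Bev_def grid_cancel by simp
  moreover have "X (real (6*2^j)/2^j) \<omega> \<ge> - 3*2^j" using b[of "6*2^j"] by simp
  ultimately show ?thesis using d by simp
qed

lemma ex_Icc_sets:
  assumes a0: "0 \<le> a"
  shows "{\<omega>\<in>space M. \<exists>t\<in>{a..b}. X t \<omega> \<ge> c} \<in> sets M"
proof -
  have [measurable]: "X (max 0 t) \<in> borel_measurable M" for t using bm_meas by simp
  have [measurable]: "X a \<in> borel_measurable M" using bm_meas a0 by simp
  have key: "(\<exists>t\<in>{a..b}. X t \<omega> \<ge> c) \<longleftrightarrow> (a \<le> b \<and> (\<forall>i::nat. (\<exists>q::rat. a \<le> of_rat q \<and> of_rat q \<le> b \<and>
       X (max 0 (of_rat q)) \<omega> > c - 1/real (Suc i)) \<or> X a \<omega> > c - 1/real (Suc i)))"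
    if w: "\<omega> \<in> space M" for \<omega>
  proof
    assume "\<exists>t\<in>{a..b}. X t \<omega> \<ge> c"
    then obtain t where t: "t \<in> {a..b}" "X t \<omega> \<ge> c" by blast
    have ab: "a \<le> b" using t by simp
    show "a \<le> b \<and> (\<forall>i::nat. (\<exists>q::rat. a \<le> of_rat q \<and> of_rat q \<le> b \<and>
       X (max 0 (of_rat q)) \<omega> > c - 1/real (Suc i)) \<or> X a \<omega> > c - 1/real (Suc i))"
    proof (intro conjI allI ab)
      fix i :: nat
      have ipos: "0 < 1/real (Suc i)" by simp
      show "(\<exists>q::rat. a \<le> of_rat q \<and> of_rat q \<le> b \<and>
         X (max 0 (of_rat q)) \<omega> > c - 1/real (Suc i)) \<or> X a \<omega> > c - 1/real (Suc i)"
      proof (cases "a < b")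
        case False
        then have "t = a" using t by auto
        then have "X a \<omega> \<ge> c" using t by simp
        then show ?thesis using ipos by (intro disjI2) linarith
      next
        case True
        have t0: "t \<in> {0..}" using t a0 by auto
        from bm_cont[OF w] t0 ipos obtain dl where dl: "dl > 0"
          "\<And>s. s \<in> {0..} \<Longrightarrow> dist s t < dl \<Longrightarrow> dist (X s \<omega>) (X t \<omega>) < 1/real (Suc i)"
          unfolding continuous_on_iff by metis
        have "max a (t - dl) < min b (t + dl)" using True t dl by auto
        then obtain r where r: "r \<in> \<rat>" "max a (t - dl) < r" "r < min b (t + dl)"
          using Rats_dense_in_real by blast
        then obtain q where q: "r = of_rat q" by (auto elim: Rats_cases)
        have "dist (X r \<omega>) (X t \<omega>) < 1/real (Suc i)" using dl(2)[of r] r a0 by (auto simp: dist_real_def)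
        then have "X r \<omega> > c - 1/real (Suc i)" using t by (auto simp: dist_real_def)
        moreover have "max 0 r = r" using r a0 by auto
        ultimately show ?thesis using r q by (intro disjI1 exI[of _ q]) auto
      qed
    qed
  next
    assume R: "a \<le> b \<and> (\<forall>i::nat. (\<exists>q::rat. a \<le> of_rat q \<and> of_rat q \<le> b \<and>
       X (max 0 (of_rat q)) \<omega> > c - 1/real (Suc i)) \<or> X a \<omega> > c - 1/real (Suc i))"
    have "continuous_on {a..b} (\<lambda>t. X t \<omega>)"
      using bm_cont[OF w] by (rule continuous_on_subset) (use a0 in auto)
    then obtain t0 where t0: "t0 \<in> {a..b}" "\<forall>s\<in>{a..b}. X s \<omega> \<le> X t0 \<omega>"
      using continuous_attains_sup[of "{a..b}" "\<lambda>t. X t \<omega>"] R by auto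
    have "X t0 \<omega> \<ge> c"
    proof (rule ccontr)
      assume "\<not> X t0 \<omega> \<ge> c"
      then have "c - X t0 \<omega> > 0" by simp
      then obtain i where i: "inverse (real (Suc i)) < c - X t0 \<omega>" using reals_Archimedean by blast
      then have i': "1/real (Suc i) < c - X t0 \<omega>" by (simp add: inverse_eq_divide)
      from R have "(\<exists>q::rat. a \<le> of_rat q \<and> of_rat q \<le> b \<and>
         X (max 0 (of_rat q)) \<omega> > c - 1/real (Suc i)) \<or> X a \<omega> > c - 1/real (Suc i)" by blast
      then show False
      proof
        assume "\<exists>q::rat. a \<le> of_rat q \<and> of_rat q \<le> b \<and> X (max 0 (of_rat q)) \<omega> > c - 1/real (Suc i)"
        then obtain q :: rat where q: "a \<le> of_rat q" "of_rat q \<le> b" "X (max 0 (of_rat q)) \<omega> > c - 1/real (Suc i)"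
          by blast
        have "max 0 (of_rat q) = (of_rat q :: real)" using q a0 by auto
        then have "X (of_rat q) \<omega> \<le> X t0 \<omega>" "X (of_rat q) \<omega> > c - 1/real (Suc i)" using t0 q by auto
        then show False using i' by linarith
      next
        assume "X a \<omega> > c - 1/real (Suc i)"
        moreover have "X a \<omega> \<le> X t0 \<omega>" using t0 R by auto
        ultimately show False using i' by linarith
      qed
    qed
    then show "\<exists>t\<in>{a..b}. X t \<omega> \<ge> c" using t0 by blast
  qed
  have eq: "{\<omega>\<in>space M. \<exists>t\<in>{a..b}. X t \<omega> \<ge> c} = {\<omega>\<in>space M. a \<le> b \<and> (\<forall>i::nat. (\<exists>q::rat. a \<le> of_rat q \<and> of_rat q \<le> b \<and>
       X (max 0 (of_rat q)) \<omega> > c - 1/real (Suc i)) \<or> X a \<omega> > c - 1/real (Suc i))}"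
    using key by blast
  show ?thesis unfolding eq by measurable
qed

lemma S_sets: "{\<omega>\<in>space M. (\<exists>t\<ge>0. X t \<omega> \<ge> 1) \<and> tau_p X \<omega> \<ge> 6} \<in> sets M"
proof -
  have key: "((\<exists>t\<ge>0. X t \<omega> \<ge> 1) \<and> tau_p X \<omega> \<ge> 6) \<longleftrightarrow>
      (\<exists>N::nat. \<exists>t\<in>{0..real N}. X t \<omega> \<ge> 1) \<and> (\<forall>k::nat. \<not>(\<exists>t\<in>{0..6 - 1/real (Suc k)}. X t \<omega> \<ge> 1))" for \<omega>
  proof -
    have e1: "(\<exists>t\<ge>0. X t \<omega> \<ge> 1) \<longleftrightarrow> (\<exists>N::nat. \<exists>t\<in>{0..real N}. X t \<omega> \<ge> 1)"
    proof
      assume "\<exists>t\<ge>0. X t \<omega> \<ge> 1"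
      then obtain t where t: "t \<ge> 0" "X t \<omega> \<ge> 1" by blast
      moreover obtain N :: nat where "t \<le> real N" using real_arch_simple by blast
      ultimately show "\<exists>N::nat. \<exists>t\<in>{0..real N}. X t \<omega> \<ge> 1" by (intro exI[of _ N] bexI[of _ t]) auto
    qed auto
    have e2: "tau_p X \<omega> \<ge> 6 \<longleftrightarrow> (\<forall>k::nat. \<not>(\<exists>t\<in>{0..6 - 1/real (Suc k)}. X t \<omega> \<ge> 1))"
      if ex: "\<exists>t\<ge>0. X t \<omega> \<ge> 1"
    proof -
      define H where "H = {t. t \<ge> 0 \<and> X t \<omega> \<ge> 1}"
      have ne: "H \<noteq> {}" using ex by (auto simp: H_def)
      have bdd: "bdd_below H" by (auto simp: H_def bdd_below_def)
      have tau: "tau_p X \<omega> = Inf H" by (simp add: tau_p_def H_def)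
      show ?thesis
      proof
        assume T: "tau_p X \<omega> \<ge> 6"
        show "\<forall>k::nat. \<not>(\<exists>t\<in>{0..6 - 1/real (Suc k)}. X t \<omega> \<ge> 1)"
        proof (intro allI notI)
          fix k :: nat
          assume "\<exists>t\<in>{0..6 - 1/real (Suc k)}. X t \<omega> \<ge> 1"
          then obtain t where t: "t \<in> {0..6 - 1/real (Suc k)}" "X t \<omega> \<ge> 1" by blast
          then have "t \<in> H" by (simp add: H_def)
          then have "Inf H \<le> t" by (rule cInf_lower[OF _ bdd])
          moreover have "t < 6"
          proof -
            have "t \<le> 6 - 1/real (Suc k)" using t(1) by simp
            moreover have "0 < 1/real (Suc k)" by simp
            ultimately show ?thesis by linarith
          qed
          ultimately show False using T tau by simp
        qed
      next
        assume A: "\<forall>k::nat. \<not>(\<exists>t\<in>{0..6 - 1/real (Suc k)}. X t \<omega> \<ge> 1)"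
        have "6 \<le> Inf H"
        proof (rule cInf_greatest[OF ne])
          fix h assume h: "h \<in> H"
          show "6 \<le> h"
          proof (rule ccontr)
            assume "\<not> 6 \<le> h"
            then have "6 - h > 0" by simp
            then obtain k where k: "inverse (real (Suc k)) < 6 - h" using reals_Archimedean by blast
            then have "h \<in> {0..6 - 1/real (Suc k)}" using h by (auto simp: H_def inverse_eq_divide)
            then show False using A h by (auto simp: H_def)
          qed
        qed
        then show "tau_p X \<omega> \<ge> 6" using tau by simp
      qed
    qed
    show ?thesis using e1 e2 by blast
  qed
  have eq: "{\<omega>\<in>space M. (\<exists>t\<ge>0. X t \<omega> \<ge> 1) \<and> tau_p X \<omega> \<ge> 6} =
     (\<Union>N. {\<omega>\<in>space M. \<exists>t\<in>{0..real N}. X t \<omega> \<ge> 1}) \<inter>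
     (space M - (\<Union>k. {\<omega>\<in>space M. \<exists>t\<in>{0..6 - 1/real (Suc k)}. X t \<omega> \<ge> 1}))"
    using key by blast
  have s1: "{\<omega>\<in>space M. \<exists>t\<in>{0..real N}. X t \<omega> \<ge> 1} \<in> sets M" for N :: nat
    by (rule ex_Icc_sets) simp
  have s2: "{\<omega>\<in>space M. \<exists>t\<in>{0..6 - 1/real (Suc k)}. X t \<omega> \<ge> 1} \<in> sets M" for k :: nat
    by (rule ex_Icc_sets) simp
  show ?thesis unfolding eq using s1 s2 by auto
qed

lemma Fev_sets: "Fev j n \<in> sets M"
proof -
  have "(\<Inter>k<6*2^j. Pk j n k) \<in> sets M"
  proof (rule sets.finite_INT)
    have "0 \<in> {..<(6::nat)*2^j}" by simp
    then show "{..<(6::nat)*2^j} \<noteq> {}" by blast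
  qed (use Pk_sets in auto)
  then show ?thesis unfolding Fev_def using Bev_sets by auto
qed

lemma prob_pos: "P.prob {\<omega>\<in>space M. (\<exists>t\<ge>0. X t \<omega> \<ge> 1) \<and> tau_p X \<omega> \<ge> 6} > 0"
proof -
  obtain j where j: "P.prob (Hev j) > 1/2" using Hev_big by blast
  define q where "q = P.prob (Hev j) - 1/2"
  have qpos: "q > 0" using j by (simp add: q_def)
  have "P.prob {\<omega>\<in>space M. X (real (Suc (6*2^j)*2^0)/2^(j+0)) \<omega> - X (real (6*2^j*2^0)/2^(j+0)) \<omega> \<ge> 3*2^j+1} > 0"
    by (rule inc_tail_pos) (simp_all add: field_simps)
  then have Bpos: "P.prob (Bev j 0) > 0" unfolding Bev_def .
  define \<delta> where "\<delta> = q ^ (6*2^j) * P.prob (Bev j 0)"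
  have dpos: "\<delta> > 0" using qpos Bpos by (simp add: \<delta>_def)
  have Fn: "P.prob (Fev j n) \<ge> \<delta>" for n
  proof -
    have "(\<Prod>k<(6::nat)*2^j. q) \<le> (\<Prod>k<6*2^j. P.prob (Pk j n k))"
      using Pk_lower qpos by (intro prod_mono) (auto simp: q_def less_imp_le)
    then have "q ^ (6*2^j) \<le> (\<Prod>k<6*2^j. P.prob (Pk j n k))" by simp
    then have "\<delta> \<le> (\<Prod>k<6*2^j. P.prob (Pk j n k)) * P.prob (Bev j n)"
      unfolding \<delta>_def Bev_const[of j n] by (intro mult_right_mono) auto
    then show ?thesis using Fev_indep[of j n] by simp
  qed
  have lim: "(\<lambda>n. P.prob (Fev j n)) \<longlonglongrightarrow> P.prob (\<Inter>n. Fev j n)"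
    using Fev_sets Fev_dec[of j] by (intro P.finite_Lim_measure_decseq) auto
  have I: "P.prob (\<Inter>n. Fev j n) \<ge> \<delta>"
    using Fn by (intro LIMSEQ_le_const[OF lim]) auto
  have sub: "(\<Inter>n. Fev j n) \<subseteq> {\<omega>\<in>space M. (\<exists>t\<ge>0. X t \<omega> \<ge> 1) \<and> tau_p X \<omega> \<ge> 6}"
  proof
    fix \<omega> assume w: "\<omega> \<in> (\<Inter>n. Fev j n)"
    have sp: "\<omega> \<in> space M" using w Fev_sets sets.sets_into_space by blast
    note fp = Fev_path[OF w]
    define T1 :: real where "T1 = real (Suc (6*2^j))/2^j"
    have T1: "T1 \<ge> 0" "X T1 \<omega> \<ge> 1" using fp by (auto simp: T1_def)
    have "6 \<le> Inf {t. t \<ge> 0 \<and> X t \<omega> \<ge> 1}"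
    proof (rule cInf_greatest)
      show "{t. t \<ge> 0 \<and> X t \<omega> \<ge> 1} \<noteq> {}" using T1 by auto
      fix h assume h: "h \<in> {t. t \<ge> 0 \<and> X t \<omega> \<ge> 1}"
      show "6 \<le> h"
      proof (rule ccontr)
        assume "\<not> 6 \<le> h"
        then have "X h \<omega> \<le> 1/2" using fp h by auto
        then show False using h by simp
      qed
    qed
    then show "\<omega> \<in> {\<omega>\<in>space M. (\<exists>t\<ge>0. X t \<omega> \<ge> 1) \<and> tau_p X \<omega> \<ge> 6}"
      using sp T1 by (auto simp: tau_p_def)
  qed
  have "P.prob (\<Inter>n. Fev j n) \<le> P.prob {\<omega>\<in>space M. (\<exists>t\<ge>0. X t \<omega> \<ge> 1) \<and> tau_p X \<omega> \<ge> 6}"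
    using sub S_sets by (intro P.finite_measure_mono) auto
  then show ?thesis using I dpos by linarith
qed

end

theorem lemma5p2:
  fixes M :: "'a measure" and X :: "real \<Rightarrow> 'a \<Rightarrow> real"
  assumes "std_brownian_motion M X"
  shows "(\<forall>\<omega>\<in>space M. (\<exists>t\<ge>0. X t \<omega> \<ge> 1) \<and> tau_p X \<omega> \<ge> 6 \<longrightarrow>
            (\<forall>t. 0 \<le> t \<and> t < tau_p X \<omega> - 5 \<longrightarrow> \<not> sat Lp (\<lambda>s. X s \<omega>) t phi1) \<and>
            sat Lp (\<lambda>s. X s \<omega>) (tau_p X \<omega> - 5) phi1 \<and>
            (\<forall>t. tau_p X \<omega> - 5 < t \<and> t < tau_p X \<omega> - 3 \<longrightarrow> \<not> sat Lp (\<lambda>s. X s \<omega>) t phi1) \<and>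
            \<not> (tau_p X \<omega> - 5) islimpt {t. t \<ge> 0 \<and> sat Lp (\<lambda>s. X s \<omega>) t phi1})
       \<and> measure M {\<omega>\<in>space M. (\<exists>t\<ge>0. X t \<omega> \<ge> 1) \<and> tau_p X \<omega> \<ge> 6} > 0"
proof (intro conjI ballI impI)
  fix \<omega> assume w: "\<omega> \<in> space M" and h: "(\<exists>t\<ge>0. X t \<omega> \<ge> 1) \<and> tau_p X \<omega> \<ge> 6"
  have "Inf {t. t \<ge> 0 \<and> X t \<omega> \<ge> 1} \<ge> 6" using h by (simp add: tau_p_def)
  note D = det_part[OF bm_cont[OF assms w] conjunct1[OF h] this, folded tau_p_def]
  then show "\<forall>t. 0 \<le> t \<and> t < tau_p X \<omega> - 5 \<longrightarrow> \<not> sat Lp (\<lambda>s. X s \<omega>) t phi1"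
    "sat Lp (\<lambda>s. X s \<omega>) (tau_p X \<omega> - 5) phi1"
    "\<forall>t. tau_p X \<omega> - 5 < t \<and> t < tau_p X \<omega> - 3 \<longrightarrow> \<not> sat Lp (\<lambda>s. X s \<omega>) t phi1"
    "\<not> (tau_p X \<omega> - 5) islimpt {t. t \<ge> 0 \<and> sat Lp (\<lambda>s. X s \<omega>) t phi1}"
    by (simp_all add: tau_p_def)
next
  show "measure M {\<omega>\<in>space M. (\<exists>t\<ge>0. X t \<omega> \<ge> 1) \<and> tau_p X \<omega> \<ge> 6} > 0"
    by (rule prob_pos[OF assms])
qed

end
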